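(* In the standing setting, let $\alpha$ be a bounded operator on $\ell^2(X^\circ)$ such that $\alpha\rho_E(f)=0$ for every $f\in E=C_0(X)$. Then $\alpha=0$.
   Context: $R$ is a rational function of degree $\geq 2$, $X$ its Julia set, Fatou set, or the Riemann sphere, $X\ne\emptyset$, $R:X\to X$. $X^\circ$ is the complement in $X$ of the grand orbit (under $x\sim y\iff R^{\circ m}(x)=R^{\circ n}(y)$ for some $m,n\ge 0$) of all fixed points and branch points of the iterates $R^{\circ n}$, $n\ge1$; it is dense and completely invariant. $(e_x)_{x\in X^\circ}$ is the standard basis of $\ell^2(X^\circ)$ and $\rho_E(f)e_y=\sum_{x\in X^\circ,R(x)=y}f(x)e_x$ for $f\in C_0(X)$. *)

theory Defs
  imports "HOL-Analysis.Analysis" "HOL-Computational_Algebra.Polynomial_Factorial"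
begin

datatype rsphere = Fin complex | Infty

text \<open>Inverse stereographic projection onto the unit sphere of complex x real = R^3.\<close>
definition stereo :: "rsphere \<Rightarrow> complex \<times> real" where
  "stereo p = (case p of
      Fin z \<Rightarrow> (of_real (2 / (1 + (cmod z)\<^sup>2)) * z, ((cmod z)\<^sup>2 - 1) / ((cmod z)\<^sup>2 + 1))
    | Infty \<Rightarrow> (0, 1))"

lemma stereo_snd_lt: "snd (stereo (Fin z)) < 1"
proof -
  have "(cmod z)\<^sup>2 + 1 > 0" by (simp add: add_nonneg_pos)
  then show ?thesis by (simp add: stereo_def divide_less_eq)
qed

lemma stereo_inj: "stereo p = stereo q \<Longrightarrow> p = q"
proof -
  assume eq: "stereo p = stereo q"
  show "p = q"
  proof (cases p; cases q)
    fix z w assume p: "p = Fin z" and q: "q = Fin w"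
    define a where "a = (cmod z)\<^sup>2"
    define b where "b = (cmod w)\<^sup>2"
    have a0: "a \<ge> 0" "b \<ge> 0" by (simp_all add: a_def b_def)
    have "(a - 1) / (a + 1) = (b - 1) / (b + 1)"
      using eq p q by (simp add: stereo_def a_def b_def)
    then have "(a - 1) * (b + 1) = (b - 1) * (a + 1)"
      using a0 by (simp add: divide_simps split: if_splits)
    then have ab: "a = b" by (simp add: algebra_simps)
    have "of_real (2 / (1 + a)) * z = of_real (2 / (1 + b)) * w"
      using eq p q by (simp add: stereo_def a_def b_def)
    moreover have "1 + complex_of_real b \<noteq> 0"
    proof
      assume "1 + complex_of_real b = 0"
      then have "complex_of_real (1 + b) = 0" by simp
      then have "1 + b = 0" by (simp only: of_real_eq_0_iff)
      then show False using a0 by simp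
    qed
    ultimately have "z = w" using ab a0 by simp
    then show ?thesis using p q by simp
  next
    fix z assume "p = Fin z" "q = Infty"
    then show ?thesis using eq stereo_snd_lt[of z] by (simp add: stereo_def)
  next
    fix z assume "p = Infty" "q = Fin z"
    then show ?thesis using eq stereo_snd_lt[of z] by (simp add: stereo_def)
  next
    assume "p = Infty" "q = Infty" then show ?thesis by simp
  qed
qed

instantiation rsphere :: metric_space
begin

definition dist_rsphere :: "rsphere \<Rightarrow> rsphere \<Rightarrow> real" where
  "dist_rsphere p q = norm (stereo p - stereo q)"

definition uniformity_rsphere :: "(rsphere \<times> rsphere) filter" where
  "uniformity_rsphere = (INF e\<in>{0 <..}. principal {(x, y). dist x y < e})"

definition open_rsphere :: "rsphere set \<Rightarrow> bool" where
  "open_rsphere U = (\<forall>x\<in>U. \<forall>\<^sub>F (x', y) in uniformity. x' = x \<longrightarrow> y \<in> U)"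

instance
proof
  show "uniformity = (INF e\<in>{0 <..}. principal {(x, y). dist x y < e} :: (rsphere \<times> rsphere) filter)"
    by (rule uniformity_rsphere_def)
  show "open U = (\<forall>x\<in>U. \<forall>\<^sub>F (x', y) in uniformity. x' = x \<longrightarrow> y \<in> U)" for U :: "rsphere set"
    by (rule open_rsphere_def)
  show "(dist x y = 0) = (x = y)" for x y :: rsphere
    using stereo_inj by (auto simp: dist_rsphere_def)
  show "dist x y \<le> dist x z + dist y z" for x y z :: rsphere
    unfolding dist_rsphere_def
    by (rule norm_diff_triangle_le[OF order_refl]) (simp add: norm_minus_commute)
qed

end

definition rat_map :: "complex poly \<Rightarrow> complex poly \<Rightarrow> rsphere \<Rightarrow> rsphere" where
  "rat_map p q x = (case x of
      Fin z \<Rightarrow> (if poly q z = 0 then Infty else Fin (poly p z / poly q z))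
    | Infty \<Rightarrow> (if degree p > degree q then Infty
               else if degree p = degree q then Fin (lead_coeff p / lead_coeff q)
               else Fin 0))"

definition rat_degree :: "complex poly \<Rightarrow> complex poly \<Rightarrow> nat" where
  "rat_degree p q = max (degree p) (degree q)"

definition branch_point :: "(rsphere \<Rightarrow> rsphere) \<Rightarrow> rsphere \<Rightarrow> bool" where
  "branch_point F z \<longleftrightarrow> \<not> (\<exists>U. open U \<and> z \<in> U \<and> inj_on F U)"

text \<open>Fatou set (Beardon's definition): the set of points having an open neighbourhood on which
  the family of iterates is equicontinuous with respect to the chordal metric.\<close>
definition fatou_set :: "(rsphere \<Rightarrow> rsphere) \<Rightarrow> rsphere set" where
  "fatou_set R = {z. \<exists>U. open U \<and> z \<in> U \<and>
      (\<forall>w\<in>U. \<forall>e>0. \<exists>d>0. \<forall>n. \<forall>u\<in>U. dist u w < d \<longrightarrow> dist ((R ^^ n) u) ((R ^^ n) w) < e)}"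

definition julia_set :: "(rsphere \<Rightarrow> rsphere) \<Rightarrow> rsphere set" where
  "julia_set R = UNIV - fatou_set R"

definition grand_orbit_rel :: "(rsphere \<Rightarrow> rsphere) \<Rightarrow> rsphere \<Rightarrow> rsphere \<Rightarrow> bool" where
  "grand_orbit_rel R x y \<longleftrightarrow> (\<exists>m n. (R ^^ m) x = (R ^^ n) y)"

definition special_points :: "(rsphere \<Rightarrow> rsphere) \<Rightarrow> rsphere set" where
  "special_points R = {z. \<exists>n\<ge>1. (R ^^ n) z = z \<or> branch_point (R ^^ n) z}"

definition Xcirc :: "(rsphere \<Rightarrow> rsphere) \<Rightarrow> rsphere set \<Rightarrow> rsphere set" where
  "Xcirc R X = {x \<in> X. \<not> (\<exists>b\<in>special_points R. grand_orbit_rel R x b)}"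

definition C0 :: "'a::topological_space set \<Rightarrow> ('a \<Rightarrow> complex) set" where
  "C0 X = {f. continuous_on X f \<and>
      (\<forall>e>0. \<exists>K. compact K \<and> K \<subseteq> X \<and> (\<forall>x\<in>X - K. cmod (f x) < e))}"

definition ell2 :: "'a set \<Rightarrow> ('a \<Rightarrow> complex) set" where
  "ell2 S = {v. (\<forall>x. x \<notin> S \<longrightarrow> v x = 0) \<and> (\<lambda>x. (cmod (v x))\<^sup>2) summable_on S}"

definition ell2_norm :: "'a set \<Rightarrow> ('a \<Rightarrow> complex) \<Rightarrow> real" where
  "ell2_norm S v = sqrt (infsum (\<lambda>x. (cmod (v x))\<^sup>2) S)"

definition bounded_op :: "'a set \<Rightarrow> (('a \<Rightarrow> complex) \<Rightarrow> ('a \<Rightarrow> complex)) \<Rightarrow> bool" where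
  "bounded_op S A \<longleftrightarrow>
     (\<forall>v\<in>ell2 S. A v \<in> ell2 S) \<and>
     (\<forall>v\<in>ell2 S. \<forall>w\<in>ell2 S. A (\<lambda>x. v x + w x) = (\<lambda>x. A v x + A w x)) \<and>
     (\<forall>c. \<forall>v\<in>ell2 S. A (\<lambda>x. c * v x) = (\<lambda>x. c * A v x)) \<and>
     (\<exists>C. \<forall>v\<in>ell2 S. ell2_norm S (A v) \<le> C * ell2_norm S v)"

definition basis_vec :: "'a \<Rightarrow> 'a \<Rightarrow> complex" where
  "basis_vec y = (\<lambda>x. if x = y then 1 else 0)"

text \<open>The representation rho_E(f) on l^2(S):
  rho_E(f) e_y = sum over x in S with R x = y of f(x) e_x, i.e. (rho_E(f) v)(x) = f(x) v(R x).\<close>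
definition rhoE :: "('a \<Rightarrow> 'a) \<Rightarrow> 'a set \<Rightarrow> ('a \<Rightarrow> complex) \<Rightarrow> ('a \<Rightarrow> complex) \<Rightarrow> ('a \<Rightarrow> complex)" where
  "rhoE R S f v = (\<lambda>x. if x \<in> S then f x * v (R x) else 0)"

end

theory Submission imports Defs "HOL-Complex_Analysis.Complex_Analysis" begin


lemma dist_stereo: "dist x y = dist (stereo x) (stereo y)"
  by (simp add: dist_rsphere_def dist_norm)

lemma continuous_on_stereo: "continuous_on S stereo"
  unfolding continuous_on_iff dist_stereo[symmetric] by blast

lemma cont_via_stereo:
  fixes g :: "'a::metric_space \<Rightarrow> rsphere"
  assumes "continuous_on S (\<lambda>x. stereo (g x))"
  shows "continuous_on S g"
  using assms by (simp add: continuous_on_iff dist_stereo)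

definition psi :: "complex \<Rightarrow> rsphere" where
  "psi z = (if z = 0 then Infty else Fin (1 / z))"

lemma stereo_Fin: "stereo (Fin z) = (of_real (2 / (1 + (cmod z)\<^sup>2)) * z, ((cmod z)\<^sup>2 - 1) / ((cmod z)\<^sup>2 + 1))"
  by (simp add: stereo_def)

lemma stereo_psi: "stereo (psi z) = (of_real (2 / (1 + (cmod z)\<^sup>2)) * cnj z, (1 - (cmod z)\<^sup>2) / (1 + (cmod z)\<^sup>2))"
proof (cases "z = 0")
  case True then show ?thesis by (simp add: psi_def stereo_def)
next
  case False
  define r where "r = (cmod z)\<^sup>2"
  have r: "r > 0" using False by (simp add: r_def)
  have iz: "1 / z = cnj z / of_real r"
  proof -
    have "complex_of_real r = z * cnj z" unfolding r_def by (rule complex_norm_square)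
    then show ?thesis using False by (simp add: field_simps)
  qed
  have n: "(cmod (1/z))\<^sup>2 = 1 / r" by (simp add: norm_divide r_def power_divide)
  have r1: "1 + r > 0" "r + 1 > 0" "r \<noteq> 0" "r + r * r > 0" "r * r + r > 0" using r by (auto simp: add_pos_pos)
  have a1: "1 + 1/r = (1 + r)/r" using r1 by (simp add: field_simps)
  have e1: "2 / (1 + 1/r) / r = 2 / (1 + r)" unfolding a1 using r1 by (simp add: field_simps)
  have a2: "1/r - 1 = (1 - r)/r" "1/r + 1 = (1 + r)/r" using r1 by (simp_all add: field_simps)
  have e2: "(1/r - 1) / (1/r + 1) = (1 - r) / (1 + r)" unfolding a2 using r1 by (simp add: field_simps)
  have "of_real (2 / (1 + 1/r)) * (1/z) = of_real (2 / (1 + r)) * cnj z"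
    unfolding iz e1[symmetric] by simp
  then show ?thesis using False
    by (simp add: psi_def stereo_Fin n e2 r_def[symmetric])
qed

lemma nz_aux: "1 + (cmod x)\<^sup>2 \<noteq> 0" "(cmod x)\<^sup>2 + 1 \<noteq> 0"
  "1 + (complex_of_real (cmod x))\<^sup>2 \<noteq> 0"
proof -
  show a: "1 + (cmod x)\<^sup>2 \<noteq> 0" by (metis add_pos_nonneg zero_le_power2 zero_less_one less_irrefl)
  then show "(cmod x)\<^sup>2 + 1 \<noteq> 0" by (simp add: add.commute)
  have "1 + (complex_of_real (cmod x))\<^sup>2 = of_real (1 + (cmod x)\<^sup>2)" by simp
  then show "1 + (complex_of_real (cmod x))\<^sup>2 \<noteq> 0" using a by (metis of_real_eq_0_iff)
qed

lemma continuous_Fin: "continuous_on S Fin"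
  by (rule cont_via_stereo) (simp add: stereo_Fin, intro continuous_intros, auto simp: nz_aux)

lemma continuous_psi: "continuous_on S psi"
  by (rule cont_via_stereo) (simp only: stereo_psi, intro continuous_intros, auto simp: nz_aux)




definition phi1 :: "complex \<times> real \<Rightarrow> complex" where
  "phi1 s = fst s / of_real (1 - snd s)"
definition phi2 :: "complex \<times> real \<Rightarrow> complex" where
  "phi2 s = cnj (fst s) / of_real (1 + snd s)"

lemma one_plus_ofreal_eq0: "(1 + complex_of_real b = 0) = (b = -1)"
  by (simp add: complex_eq_iff; linarith)

lemma phi1_Fin: "phi1 (stereo (Fin w)) = w"
proof -
  define r where "r = (cmod w)\<^sup>2"
  have r: "r \<ge> 0" by (simp add: r_def)
  have e: "1 - (r - 1) / (r + 1) = 2 / (1 + r)" using r by (simp add: field_simps)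
  have "2 / (1 + r) \<noteq> 0" using r by simp
  then have "complex_of_real (2 / (1 + r)) \<noteq> 0" by (metis of_real_eq_0_iff)
  then show ?thesis unfolding phi1_def stereo_Fin r_def[symmetric]
    using r one_plus_ofreal_eq0[of r] by (auto simp: e)
qed

lemma Fin_phi1: "snd (stereo y) < 1 \<Longrightarrow> y = Fin (phi1 (stereo y))"
proof (cases y)
  case (Fin x) then show ?thesis by (simp only: phi1_Fin)
next
  case Infty then show "snd (stereo y) < 1 \<Longrightarrow> ?thesis" by (simp add: stereo_def)
qed

lemma psi_inj: "psi a = psi b \<Longrightarrow> a = b"
  by (auto simp: psi_def split: if_splits)

lemma phi2_psi: "phi2 (stereo (psi w)) = w"
proof (cases "w = 0")
  case True then show ?thesis by (simp add: psi_def stereo_def phi2_def)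
next
  case False
  define r where "r = (cmod w)\<^sup>2"
  have r: "r \<ge> 0" by (simp add: r_def)
  have e: "1 + (1 - r) / (1 + r) = 2 / (1 + r)" using r by (simp add: field_simps)
  have "2 / (1 + r) \<noteq> 0" using r by simp
  then have "complex_of_real (2 / (1 + r)) \<noteq> 0" by (metis of_real_eq_0_iff)
  then show ?thesis unfolding phi2_def stereo_psi r_def[symmetric]
    using r one_plus_ofreal_eq0[of r] by (auto simp: e)
qed

lemma psi_phi2: "snd (stereo y) > -1 \<Longrightarrow> y = psi (phi2 (stereo y))"
proof (cases y)
  case (Fin w)
  assume a: "snd (stereo y) > -1"
  define r where "r = (cmod w)\<^sup>2"
  have r: "r \<ge> 0" by (simp add: r_def)
  have "(r - 1) / (r + 1) > -1" using a Fin by (simp add: stereo_def r_def)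
  then have "r > 0" using r by (simp add: field_simps)
  then have w0: "w \<noteq> 0" by (auto simp: r_def)
  have "psi (1/w) = Fin w" using w0 by (simp add: psi_def)
  then have "Fin w = psi (1/w)" by simp
  then show ?thesis using Fin phi2_psi by metis
next
  case Infty then show ?thesis by (simp add: psi_def stereo_def phi2_def)
qed

lemma snd_stereo_psi: "snd (stereo (psi z)) > -1"
proof -
  have "(1 - (cmod z)\<^sup>2) / (1 + (cmod z)\<^sup>2) > -1"
    by (simp add: field_simps add_pos_nonneg)
  then show ?thesis by (simp add: stereo_psi)
qed

lemma open_Fin_image:
  assumes "open V" shows "open (Fin ` V)"
proof -
  have c: "continuous_on {s. snd s < 1} phi1"
    unfolding phi1_def by (intro continuous_intros) auto
  have o1: "open {s::complex\<times>real. snd s < 1}"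
    by (intro open_Collect_less continuous_intros)
  have "open (phi1 -` V \<inter> {s. snd s < 1})"
    using c o1 assms continuous_on_open_vimage by blast
  then have o: "open (stereo -` (phi1 -` V \<inter> {s. snd s < 1}))"
    by (intro open_vimage continuous_on_stereo)
  have "Fin ` V = stereo -` (phi1 -` V \<inter> {s. snd s < 1})"
  proof
    show "Fin ` V \<subseteq> stereo -` (phi1 -` V \<inter> {s. snd s < 1})"
    proof
      fix u assume "u \<in> Fin ` V"
      then obtain z where z: "z \<in> V" "u = Fin z" by blast
      have "phi1 (stereo (Fin z)) \<in> V" using z(1) by (simp only: phi1_Fin)
      then show "u \<in> stereo -` (phi1 -` V \<inter> {s. snd s < 1})"
        using stereo_snd_lt[of z] z(2) by simp
    qed
    show "stereo -` (phi1 -` V \<inter> {s. snd s < 1}) \<subseteq> Fin ` V"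
    proof
      fix y assume y: "y \<in> stereo -` (phi1 -` V \<inter> {s. snd s < 1})"
      then have "y = Fin (phi1 (stereo y))" using Fin_phi1 by simp
      moreover have "phi1 (stereo y) \<in> V" using y by simp
      ultimately show "y \<in> Fin ` V" by (metis imageI)
    qed
  qed
  then show ?thesis using o by simp
qed

lemma open_psi_image:
  assumes "open V" shows "open (psi ` V)"
proof -
  have c: "continuous_on {s. -1 < snd s} phi2"
    unfolding phi2_def by (intro continuous_intros) (auto simp: one_plus_ofreal_eq0)
  have o1: "open {s::complex\<times>real. -1 < snd s}"
    by (intro open_Collect_less continuous_intros)
  have "open (phi2 -` V \<inter> {s. -1 < snd s})"
    using c o1 assms continuous_on_open_vimage by blast
  then have o: "open (stereo -` (phi2 -` V \<inter> {s. -1 < snd s}))"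
    by (intro open_vimage continuous_on_stereo)
  have "psi ` V = stereo -` (phi2 -` V \<inter> {s. -1 < snd s})"
  proof
    show "psi ` V \<subseteq> stereo -` (phi2 -` V \<inter> {s. -1 < snd s})"
    proof
      fix u assume "u \<in> psi ` V"
      then obtain z where z: "z \<in> V" "u = psi z" by blast
      have "phi2 (stereo (psi z)) \<in> V" using z(1) by (simp only: phi2_psi)
      then show "u \<in> stereo -` (phi2 -` V \<inter> {s. -1 < snd s})"
        using snd_stereo_psi[of z] z(2) by simp
    qed
    show "stereo -` (phi2 -` V \<inter> {s. -1 < snd s}) \<subseteq> psi ` V"
    proof
      fix y assume y: "y \<in> stereo -` (phi2 -` V \<inter> {s. -1 < snd s})"
      then have "y = psi (phi2 (stereo y))" using psi_phi2 by simp
      moreover have "phi2 (stereo y) \<in> V" using y by simp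
      ultimately show "y \<in> psi ` V" by (metis imageI)
    qed
  qed
  then show ?thesis using o by simp
qed

lemma rsphere_cover: "y \<in> range Fin \<or> y \<in> range psi"
  by (cases y) (auto simp: psi_def intro: range_eqI[of _ _ 0])

lemma compact_rsphere: "compact (UNIV :: rsphere set)"
proof -
  have sub: "UNIV \<subseteq> Fin ` cball 0 1 \<union> psi ` cball 0 1"
  proof
    fix y :: rsphere assume "y \<in> UNIV"
    show "y \<in> Fin ` cball 0 1 \<union> psi ` cball 0 1"
    proof (cases y)
      case (Fin w)
      show ?thesis
      proof (cases "cmod w \<le> 1")
        case True then show ?thesis using Fin by auto
      next
        case False
        then have "w \<noteq> 0" by auto
        then have "psi (1/w) = y" using Fin by (simp add: psi_def)
        moreover have "1/w \<in> cball 0 1" using False by (simp add: norm_divide divide_le_eq)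
        ultimately show ?thesis by blast
      qed
    next
      case Infty
      then have "y = psi 0" by (simp add: psi_def)
      then show ?thesis by auto
    qed
  qed
  moreover have "compact (Fin ` cball 0 1)" "compact (psi ` cball 0 1)"
    by (intro compact_continuous_image continuous_Fin continuous_psi compact_cball)+
  ultimately have "compact (Fin ` cball 0 1 \<union> psi ` cball 0 1)" by (intro compact_Un)
  moreover have "Fin ` cball 0 1 \<union> psi ` cball 0 1 = UNIV" using sub by blast
  ultimately show ?thesis by simp
qed




definition ratF :: "complex poly \<Rightarrow> complex poly \<Rightarrow> complex \<Rightarrow> rsphere" where
  "ratF P Q z = (if poly Q z = 0 then Infty else Fin (poly P z / poly Q z))"

lemma nonconst_on_ball:
  fixes A B :: "complex poly"
  assumes "0 < s" "\<forall>z\<in>ball c s. poly B z \<noteq> 0"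
    and "(\<lambda>z. poly A z / poly B z) constant_on ball c s"
  shows "\<exists>k. A = smult k B"
proof -
  obtain k where k: "\<forall>z\<in>ball c s. poly A z / poly B z = k"
    using assms(3) unfolding constant_on_def by blast
  have "ball c s \<subseteq> {z. poly (A - smult k B) z = 0}"
    using k assms(2) by (auto simp: field_simps)
  moreover have "infinite (ball c s)"
    using uncountable_ball[OF assms(1)] countable_finite by blast
  ultimately have "A - smult k B = 0"
    using poly_roots_finite finite_subset by blast
  then show ?thesis by auto
qed

lemma open_poly_nz: "open {z::complex. poly Q z \<noteq> 0}"
  using open_Collect_neq[of "poly Q" "\<lambda>_. 0"] by (simp add: continuous_on_poly)

lemma key_local:
  assumes "\<not> (poly P c = 0 \<and> poly Q c = 0)"
  shows "\<exists>r>0. \<exists>h g. (g = Fin \<or> g = psi) \<and> h holomorphic_on ball c r \<and>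
     (\<forall>z\<in>ball c r. ratF P Q z = g (h z)) \<and>
     (\<forall>s. 0 < s \<longrightarrow> s \<le> r \<longrightarrow> h constant_on ball c s \<longrightarrow> (\<exists>k. P = smult k Q \<or> Q = smult k P))"
proof (cases "poly Q c = 0")
  case False
  obtain r where r: "r > 0" "ball c r \<subseteq> {z. poly Q z \<noteq> 0}"
    using open_poly_nz[of Q] False open_contains_ball by blast
  show ?thesis
  proof (intro exI[of _ r] conjI exI[of _ "\<lambda>z. poly P z / poly Q z"] exI[of _ Fin] r(1) allI impI ballI)
    show "Fin = Fin \<or> Fin = psi" by simp
    show "(\<lambda>z. poly P z / poly Q z) holomorphic_on ball c r"
      using r(2) by (intro holomorphic_intros) auto
    show "ratF P Q z = Fin (poly P z / poly Q z)" if "z \<in> ball c r" for z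
      using that r(2) by (auto simp: ratF_def)
    show "\<exists>k. P = smult k Q \<or> Q = smult k P"
      if "0 < s" "s \<le> r" "(\<lambda>z. poly P z / poly Q z) constant_on ball c s" for s
    proof -
      have "ball c s \<subseteq> ball c r" using that(2) by auto
      then have "\<forall>z\<in>ball c s. poly Q z \<noteq> 0" using r(2) by auto
      then show ?thesis using nonconst_on_ball[OF that(1) _ that(3)] by blast
    qed
  qed
next
  case True
  then have Pc: "poly P c \<noteq> 0" using assms by blast
  obtain r where r: "r > 0" "ball c r \<subseteq> {z. poly P z \<noteq> 0}"
    using open_poly_nz[of P] Pc open_contains_ball by blast
  show ?thesis
  proof (intro exI[of _ r] conjI exI[of _ "\<lambda>z. poly Q z / poly P z"] exI[of _ psi] r(1) allI impI ballI)
    show "psi = Fin \<or> psi = psi" by simp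
    show "(\<lambda>z. poly Q z / poly P z) holomorphic_on ball c r"
      using r(2) by (intro holomorphic_intros) auto
    show "ratF P Q z = psi (poly Q z / poly P z)" if "z \<in> ball c r" for z
      using that r(2) by (auto simp: ratF_def psi_def)
    show "\<exists>k. P = smult k Q \<or> Q = smult k P"
      if "0 < s" "s \<le> r" "(\<lambda>z. poly Q z / poly P z) constant_on ball c s" for s
    proof -
      have "ball c s \<subseteq> ball c r" using that(2) by auto
      then have "\<forall>z\<in>ball c s. poly P z \<noteq> 0" using r(2) by auto
      then show ?thesis using nonconst_on_ball[OF that(1) _ that(3)] by blast
    qed
  qed
qed

lemma ratF_continuous:
  assumes "\<forall>z. \<not> (poly P z = 0 \<and> poly Q z = 0)"
  shows "continuous_on UNIV (ratF P Q)"
proof (rule continuous_at_imp_continuous_on, intro ballI)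
  fix c :: complex
  obtain r h g where r: "r > 0" "g = Fin \<or> g = psi" "h holomorphic_on ball c r"
    "\<forall>z\<in>ball c r. ratF P Q z = g (h z)"
    using key_local[of P c Q] assms by blast
  have cg: "continuous_on UNIV g" using r(2) continuous_Fin continuous_psi by blast
  have "continuous_on (ball c r) (g \<circ> h)"
    by (rule continuous_on_compose[OF holomorphic_on_imp_continuous_on[OF r(3)]])
       (rule continuous_on_subset[OF cg], simp)
  then have "continuous_on (ball c r) (ratF P Q)"
    by (rule continuous_on_cong[THEN iffD1, rotated 2]) (use r(4) in auto)
  then have "\<forall>x\<in>ball c r. isCont (ratF P Q) x"
    using continuous_on_eq_continuous_at[OF open_ball] by blast
  then show "isCont (ratF P Q) c" using r(1) by simp
qed

lemma ratF_open:
  assumes "\<forall>z. \<not> (poly P z = 0 \<and> poly Q z = 0)"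
    and "\<forall>k. P \<noteq> smult k Q \<and> Q \<noteq> smult k P"
    and "open V"
  shows "open (ratF P Q ` V)"
proof (rule Topological_Spaces.openI)
  fix y assume "y \<in> ratF P Q ` V"
  then obtain c where c: "c \<in> V" "y = ratF P Q c" by blast
  obtain r0 where r0: "r0 > 0" "ball c r0 \<subseteq> V" using assms(3) c(1) open_contains_ball by blast
  obtain r h g where r: "r > 0" "g = Fin \<or> g = psi" "h holomorphic_on ball c r"
    "\<forall>z\<in>ball c r. ratF P Q z = g (h z)"
    "\<forall>s. 0 < s \<longrightarrow> s \<le> r \<longrightarrow> h constant_on ball c s \<longrightarrow> (\<exists>k. P = smult k Q \<or> Q = smult k P)"
    using key_local[of P c Q] assms(1) by blast
  define s where "s = min r r0"
  have s: "s > 0" "s \<le> r" "ball c s \<subseteq> V" "ball c s \<subseteq> ball c r"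
    using r0 r(1) by (auto simp: s_def)
  have nc: "\<not> h constant_on ball c s" using r(5) s assms(2) by blast
  have hol: "h holomorphic_on ball c s" using r(3) s(4) holomorphic_on_subset by blast
  have "open (h ` ball c s)"
    by (rule open_mapping_thm[OF hol open_ball connected_ball open_ball order_refl nc])
  then have o: "open (g ` h ` ball c s)" using r(2) open_Fin_image open_psi_image by blast
  have "g ` h ` ball c s \<subseteq> ratF P Q ` V"
  proof
    fix u assume "u \<in> g ` h ` ball c s"
    then obtain z where z: "z \<in> ball c s" "u = g (h z)" by blast
    then have "u = ratF P Q z" using r(4) s(4) by auto
    then show "u \<in> ratF P Q ` V" using z(1) s(3) by blast
  qed
  moreover have "y \<in> g ` h ` ball c s" using c(2) r(4) s(1) r(1) by auto
  ultimately show "\<exists>T. open T \<and> y \<in> T \<and> T \<subseteq> ratF P Q ` V" using o by blast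
qed




locale ratsetup =
  fixes p q :: "complex poly"
  assumes q0: "q \<noteq> 0" and cop: "coprime p q" and deg: "rat_degree p q \<ge> 2"
begin

lemma p0: "p \<noteq> 0"
proof
  assume "p = 0"
  then have "is_unit q" using cop by simp
  then have "degree q = 0" using is_unit_iff_degree q0 by blast
  then show False using deg \<open>p = 0\<close> by (simp add: rat_degree_def)
qed

lemma no_common_root: "\<not> (poly p z = 0 \<and> poly q z = 0)"
proof
  assume "poly p z = 0 \<and> poly q z = 0"
  then have "[:-z,1:] dvd p" "[:-z,1:] dvd q" using poly_eq_0_iff_dvd by blast+
  then have "is_unit [:-z,1:]" by (rule coprime_common_divisor[OF cop])
  moreover have "[:-z,1:] \<noteq> 0" by simp
  ultimately have "degree [:-z,1:] = 0" using is_unit_iff_degree by blast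
  then show False by simp
qed

lemma not_smult: "p \<noteq> smult k q \<and> q \<noteq> smult k p"
proof safe
  assume h: "p = smult k q"
  then have "q dvd p" "q dvd q" by (simp_all add: dvd_smult)
  then have "is_unit q" by (rule coprime_common_divisor[OF cop])
  then have "degree q = 0" using is_unit_iff_degree q0 by blast
  then show False using deg h by (simp add: rat_degree_def split: if_splits)
next
  assume h: "q = smult k p"
  then have "p dvd p" "p dvd q" by (simp_all add: dvd_smult)
  then have "is_unit p" by (rule coprime_common_divisor[OF cop])
  then have "degree p = 0" using is_unit_iff_degree p0 by blast
  then show False using deg h by (simp add: rat_degree_def split: if_splits)
qed

definition "n = max (degree p) (degree q)"
definition "PP = monom 1 (n - degree p) * reflect_poly p"
definition "QQ = monom 1 (n - degree q) * reflect_poly q"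

lemma poly_rev_nz:
  fixes A :: "complex poly"
  assumes "z \<noteq> 0" "degree A \<le> n"
  shows "poly (monom 1 (n - degree A) * reflect_poly A) z = z ^ n * poly A (1/z)"
proof -
  have "poly (monom 1 (n - degree A) * reflect_poly A) z = z ^ (n - degree A) * (z ^ degree A * poly A (inverse z))"
    using assms by (simp add: poly_monom poly_reflect_poly_nz)
  also have "\<dots> = z ^ n * poly A (1/z)"
    using assms(2) by (simp add: mult.assoc[symmetric] power_add[symmetric] inverse_eq_divide)
  finally show ?thesis .
qed

lemma PP_nz: "z \<noteq> 0 \<Longrightarrow> poly PP z = z ^ n * poly p (1/z)"
  unfolding PP_def by (rule poly_rev_nz) (auto simp: n_def)
lemma QQ_nz: "z \<noteq> 0 \<Longrightarrow> poly QQ z = z ^ n * poly q (1/z)"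
  unfolding QQ_def by (rule poly_rev_nz) (auto simp: n_def)
lemma PP_0: "poly PP 0 = (if n = degree p then lead_coeff p else 0)"
  by (auto simp: PP_def poly_monom n_def)
lemma QQ_0: "poly QQ 0 = (if n = degree q then lead_coeff q else 0)"
  by (auto simp: QQ_def poly_monom n_def)

lemma rat_map_Fin: "rat_map p q (Fin z) = ratF p q z"
  by (simp add: rat_map_def ratF_def)

lemma rat_map_psi: "rat_map p q (psi z) = ratF PP QQ z"
proof (cases "z = 0")
  case False
  have zn: "z ^ n \<noteq> 0" using False by simp
  show ?thesis using False zn
    by (simp add: psi_def rat_map_def ratF_def PP_nz QQ_nz)
next
  case True
  have lq: "lead_coeff q \<noteq> 0" using q0 by simp
  show ?thesis
  proof (cases "degree p > degree q")
    case True
    then have "n \<noteq> degree q" "n = degree p" by (auto simp: n_def)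
    then show ?thesis using True \<open>z = 0\<close> by (simp add: psi_def rat_map_def ratF_def QQ_0)
  next
    case False
    then have "n = degree q" by (auto simp: n_def)
    then show ?thesis using False \<open>z = 0\<close> lq
      by (auto simp: psi_def rat_map_def ratF_def QQ_0 PP_0 n_def)
  qed
qed

lemma PQ_no_common_root: "\<not> (poly PP z = 0 \<and> poly QQ z = 0)"
proof (cases "z = 0")
  case False
  then show ?thesis using no_common_root[of "1/z"] by (simp add: PP_nz QQ_nz)
next
  case True
  have "n = degree p \<or> n = degree q" by (auto simp: n_def)
  then show ?thesis using True p0 q0 by (auto simp: PP_0 QQ_0)
qed

lemma eq_on_nonzero:
  fixes A B :: "complex poly"
  assumes "\<forall>w. w \<noteq> 0 \<longrightarrow> poly A w = poly B w"
  shows "A = B"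
proof -
  have "UNIV - {0} \<subseteq> {w. poly (A - B) w = 0}" using assms by auto
  moreover have "infinite (UNIV - {0::complex})" by (simp add: infinite_UNIV_char_0)
  ultimately have "A - B = 0" using poly_roots_finite finite_subset by blast
  then show ?thesis by simp
qed

lemma PQ_not_smult: "PP \<noteq> smult k QQ \<and> QQ \<noteq> smult k PP"
proof safe
  assume h: "PP = smult k QQ"
  have "\<forall>w. w \<noteq> 0 \<longrightarrow> poly p w = poly (smult k q) w"
  proof (intro allI impI)
    fix w :: complex assume w: "w \<noteq> 0"
    have "poly PP (1/w) = poly (smult k QQ) (1/w)" using h by simp
    then have "(1/w) ^ n * poly p w = (1/w) ^ n * (k * poly q w)" using w by (simp add: PP_nz QQ_nz)
    then show "poly p w = poly (smult k q) w" using w by simp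
  qed
  then show False using eq_on_nonzero not_smult by blast
next
  assume h: "QQ = smult k PP"
  have "\<forall>w. w \<noteq> 0 \<longrightarrow> poly q w = poly (smult k p) w"
  proof (intro allI impI)
    fix w :: complex assume w: "w \<noteq> 0"
    have "poly QQ (1/w) = poly (smult k PP) (1/w)" using h by simp
    then have "(1/w) ^ n * poly q w = (1/w) ^ n * (k * poly p w)" using w by (simp add: PP_nz QQ_nz)
    then show "poly q w = poly (smult k p) w" using w by simp
  qed
  then show False using eq_on_nonzero not_smult by blast
qed

lemma R_open: "open V \<Longrightarrow> open (rat_map p q ` V)"
proof -
  assume V: "open V"
  have "rat_map p q ` V = ratF p q ` (Fin -` V) \<union> ratF PP QQ ` (psi -` V)"
  proof
    show "rat_map p q ` V \<subseteq> ratF p q ` (Fin -` V) \<union> ratF PP QQ ` (psi -` V)"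
    proof
      fix u assume "u \<in> rat_map p q ` V"
      then obtain y where y: "y \<in> V" "u = rat_map p q y" by blast
      from rsphere_cover[of y] show "u \<in> ratF p q ` (Fin -` V) \<union> ratF PP QQ ` (psi -` V)"
        using y rat_map_Fin rat_map_psi by auto
    qed
    show "ratF p q ` (Fin -` V) \<union> ratF PP QQ ` (psi -` V) \<subseteq> rat_map p q ` V"
      by (auto simp flip: rat_map_Fin rat_map_psi)
  qed
  moreover have "open (ratF p q ` (Fin -` V))"
    by (intro ratF_open no_common_root[THEN allI] not_smult[THEN allI] open_vimage V continuous_Fin)
  moreover have "open (ratF PP QQ ` (psi -` V))"
    by (intro ratF_open PQ_no_common_root[THEN allI] PQ_not_smult[THEN allI] open_vimage V continuous_psi)
  ultimately show ?thesis by (simp add: open_Un)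
qed

lemma R_cont: "continuous_on UNIV (rat_map p q)"
proof -
  have "open (rat_map p q -` B)" if B: "open B" for B
  proof -
    have "rat_map p q -` B = Fin ` (ratF p q -` B) \<union> psi ` (ratF PP QQ -` B)"
    proof
      show "rat_map p q -` B \<subseteq> Fin ` (ratF p q -` B) \<union> psi ` (ratF PP QQ -` B)"
      proof
        fix y assume "y \<in> rat_map p q -` B"
        from rsphere_cover[of y] show "y \<in> Fin ` (ratF p q -` B) \<union> psi ` (ratF PP QQ -` B)"
          using \<open>y \<in> rat_map p q -` B\<close> rat_map_Fin rat_map_psi by auto
      qed
      show "Fin ` (ratF p q -` B) \<union> psi ` (ratF PP QQ -` B) \<subseteq> rat_map p q -` B"
        by (auto simp: rat_map_Fin rat_map_psi)
    qed
    moreover have "open (Fin ` (ratF p q -` B))"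
      by (intro open_Fin_image open_vimage B ratF_continuous no_common_root[THEN allI])
    moreover have "open (psi ` (ratF PP QQ -` B))"
      by (intro open_psi_image open_vimage B ratF_continuous PQ_no_common_root[THEN allI])
    ultimately show ?thesis by (simp add: open_Un)
  qed
  then show ?thesis using continuous_on_open_vimage[of UNIV "rat_map p q"] by simp
qed

end



definition trunc :: "('a \<Rightarrow> complex) \<Rightarrow> 'a set \<Rightarrow> 'a \<Rightarrow> complex" where
  "trunc v F = (\<lambda>y. if y \<in> F then v y else 0)"

lemma ell2_finite_support:
  assumes "finite F" "F \<subseteq> S" "\<forall>y. y \<notin> F \<longrightarrow> v y = 0"
  shows "v \<in> ell2 S"
proof -
  have "(\<lambda>x. (cmod (v x))\<^sup>2) summable_on S \<longleftrightarrow> (\<lambda>x. (cmod (v x))\<^sup>2) summable_on F"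
    by (rule summable_on_cong_neutral) (use assms in auto)
  then show ?thesis using assms unfolding ell2_def by auto
qed

lemma bo_add:
  assumes "bounded_op S \<alpha>" "v \<in> ell2 S" "w \<in> ell2 S"
  shows "\<alpha> (\<lambda>x. v x + w x) = (\<lambda>x. \<alpha> v x + \<alpha> w x)"
proof -
  have "\<forall>v\<in>ell2 S. \<forall>w\<in>ell2 S. \<alpha> (\<lambda>x. v x + w x) = (\<lambda>x. \<alpha> v x + \<alpha> w x)"
    using assms(1) by (simp add: bounded_op_def)
  then show ?thesis using assms(2,3) by blast
qed

lemma bo_smult:
  assumes "bounded_op S \<alpha>" "v \<in> ell2 S"
  shows "\<alpha> (\<lambda>x. c * v x) = (\<lambda>x. c * \<alpha> v x)"
proof -
  have "\<forall>c. \<forall>v\<in>ell2 S. \<alpha> (\<lambda>x. c * v x) = (\<lambda>x. c * \<alpha> v x)"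
    using assms(1) by (simp add: bounded_op_def)
  then show ?thesis using assms(2) by blast
qed

lemma bounded_op_zero:
  assumes "bounded_op S \<alpha>"
  shows "\<alpha> (\<lambda>_. 0) = (\<lambda>_. 0)"
proof -
  have z: "(\<lambda>_. 0) \<in> ell2 S" by (rule ell2_finite_support[of "{}"]) auto
  have "\<alpha> (\<lambda>x. 0 * (\<lambda>_. 0) x) = (\<lambda>x. 0 * \<alpha> (\<lambda>_. 0) x)"
    by (rule bo_smult[OF assms z])
  then show ?thesis by simp
qed

lemma bounded_op_trunc:
  assumes "bounded_op S \<alpha>" "\<forall>x\<in>S. \<alpha> (basis_vec x) = (\<lambda>_. 0)"
    and "finite F" "F \<subseteq> S"
  shows "\<alpha> (trunc v F) = (\<lambda>_. 0)"
  using assms(3,4)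
proof (induction F rule: finite_induct)
  case empty
  have "trunc v {} = (\<lambda>_. 0)" by (simp add: trunc_def)
  then show ?case using bounded_op_zero[OF assms(1)] by simp
next
  case (insert a F)
  have aS: "a \<in> S" and FS: "F \<subseteq> S" using insert.prems by auto
  have e: "trunc v (insert a F) = (\<lambda>y. (\<lambda>y. v a * basis_vec a y) y + trunc v F y)"
    using insert.hyps by (auto simp: trunc_def basis_vec_def)
  have b: "basis_vec a \<in> ell2 S"
    by (rule ell2_finite_support[of "{a}"]) (use aS in \<open>auto simp: basis_vec_def\<close>)
  have b2: "(\<lambda>y. v a * basis_vec a y) \<in> ell2 S"
    by (rule ell2_finite_support[of "{a}"]) (use aS in \<open>auto simp: basis_vec_def\<close>)
  have t: "trunc v F \<in> ell2 S"
    by (rule ell2_finite_support[of F]) (use insert.hyps FS in \<open>auto simp: trunc_def\<close>)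
  have "\<alpha> (trunc v (insert a F)) = (\<lambda>y. \<alpha> (\<lambda>y. v a * basis_vec a y) y + \<alpha> (trunc v F) y)"
    unfolding e by (rule bo_add[OF assms(1) b2 t])
  moreover have "\<alpha> (\<lambda>y. v a * basis_vec a y) = (\<lambda>y. v a * \<alpha> (basis_vec a) y)"
    by (rule bo_smult[OF assms(1) b])
  ultimately show ?case using insert.IH FS assms(2) aS by simp
qed

lemma bounded_op_kills:
  assumes bo: "bounded_op S \<alpha>" and bas: "\<forall>x\<in>S. \<alpha> (basis_vec x) = (\<lambda>_. 0)"
    and v: "v \<in> ell2 S"
  shows "\<alpha> v = (\<lambda>_. 0)"
proof -
  obtain C where C: "\<forall>v\<in>ell2 S. ell2_norm S (\<alpha> v) \<le> C * ell2_norm S v"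
    using bo unfolding bounded_op_def by blast
  define g where "g = (\<lambda>y. (cmod (v y))\<^sup>2)"
  have gs: "g summable_on S" using v by (simp add: ell2_def g_def)
  have v0: "\<forall>y. y \<notin> S \<longrightarrow> v y = 0" using v by (simp add: ell2_def)
  have av: "\<alpha> v \<in> ell2 S" using bo v unfolding bounded_op_def by blast
  define N where "N = ell2_norm S (\<alpha> v)"
  have key: "N \<le> \<bar>C\<bar> * sqrt \<epsilon>" if e: "\<epsilon> > 0" for \<epsilon>
  proof -
    obtain F where F: "finite F" "F \<subseteq> S" "dist (sum g F) (infsum g S) \<le> \<epsilon>"
      using infsum_finite_approximation[OF gs e] by blast
    have gsF: "g summable_on (S - F)" using gs summable_on_subset_banach by blast
    have "infsum g S = infsum g (F \<union> (S - F))" using F(2) by (simp add: Un_absorb1)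
    also have "\<dots> = infsum g F + infsum g (S - F)"
      by (rule infsum_Un_disjoint) (use F(1) gsF in auto)
    also have "infsum g F = sum g F" using F(1) by simp
    finally have tail: "infsum g (S - F) \<le> \<epsilon>" using F(3) by (simp add: dist_real_def)
    define u where "u y = v y - trunc v F y" for y
    have u2: "(cmod (u y))\<^sup>2 = (if y \<in> F then 0 else g y)" for y
      by (simp add: u_def trunc_def g_def)
    have us: "(\<lambda>y. (cmod (u y))\<^sup>2) summable_on S \<longleftrightarrow> g summable_on (S - F)"
      by (rule summable_on_cong_neutral) (auto simp: u2)
    have ui: "infsum (\<lambda>y. (cmod (u y))\<^sup>2) S = infsum g (S - F)"
      by (rule infsum_cong_neutral) (auto simp: u2)
    have uell: "u \<in> ell2 S" using us gsF v0 by (auto simp: ell2_def u_def trunc_def)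
    have tell: "trunc v F \<in> ell2 S"
      by (rule ell2_finite_support[of F]) (use F in \<open>auto simp: trunc_def\<close>)
    have ve: "v = (\<lambda>y. trunc v F y + u y)" by (simp add: u_def)
    have "\<alpha> v = (\<lambda>y. \<alpha> (trunc v F) y + \<alpha> u y)"
      using bo_add[OF bo tell uell] ve by simp
    also have "\<dots> = \<alpha> u" using bounded_op_trunc[OF bo bas F(1,2)] by simp
    finally have "N = ell2_norm S (\<alpha> u)" by (simp add: N_def)
    also have "\<dots> \<le> C * ell2_norm S u" using C uell by blast
    also have "\<dots> \<le> \<bar>C\<bar> * ell2_norm S u"
      by (rule mult_right_mono) (auto simp: ell2_norm_def intro!: infsum_nonneg)
    also have "ell2_norm S u = sqrt (infsum g (S - F))" by (simp add: ell2_norm_def ui)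
    also have "\<bar>C\<bar> * sqrt (infsum g (S - F)) \<le> \<bar>C\<bar> * sqrt \<epsilon>"
      by (rule mult_left_mono) (use tail in auto)
    finally show ?thesis .
  qed
  have N0: "N \<le> 0"
  proof (rule ccontr)
    assume "\<not> N \<le> 0"
    then have Np: "N > 0" by simp
    define \<epsilon> where "\<epsilon> = (N / (\<bar>C\<bar> + 1))\<^sup>2"
    have ep: "\<epsilon> > 0" using Np by (simp add: \<epsilon>_def)
    have "sqrt \<epsilon> = N / (\<bar>C\<bar> + 1)" using Np by (simp add: \<epsilon>_def)
    then have "N \<le> \<bar>C\<bar> * (N / (\<bar>C\<bar> + 1))" using key[OF ep] by simp
    moreover have "\<bar>C\<bar> * (N / (\<bar>C\<bar> + 1)) < N"
    proof -
      have "\<bar>C\<bar> * N < (\<bar>C\<bar> + 1) * N" using Np by simp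
      then show ?thesis by (simp add: field_simps add_pos_nonneg)
    qed
    ultimately show False by simp
  qed
  define h where "h = (\<lambda>y. (cmod (\<alpha> v y))\<^sup>2)"
  have hs: "h summable_on S" using av by (simp add: ell2_def h_def)
  have "sqrt (infsum h S) \<le> 0" using N0 by (simp add: N_def ell2_norm_def h_def)
  then have "infsum h S \<le> 0" by simp
  then have "\<forall>y\<in>S. h y = 0"
    using nonneg_infsum_le_0D[OF _ hs] by (simp add: h_def)
  then have "\<forall>y\<in>S. \<alpha> v y = 0" by (simp add: h_def)
  moreover have "\<forall>y. y \<notin> S \<longrightarrow> \<alpha> v y = 0" using av by (simp add: ell2_def)
  ultimately show ?thesis by auto
qed




definition equi :: "(rsphere \<Rightarrow> rsphere) \<Rightarrow> rsphere set \<Rightarrow> bool" where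
  "equi R U \<longleftrightarrow> (\<forall>w\<in>U. \<forall>e>0. \<exists>d>0. \<forall>n. \<forall>u\<in>U. dist u w < d \<longrightarrow> dist ((R ^^ n) u) ((R ^^ n) w) < e)"

lemma fatou_iff: "z \<in> fatou_set R \<longleftrightarrow> (\<exists>U. open U \<and> z \<in> U \<and> equi R U)"
  by (simp add: fatou_set_def equi_def)

lemma fatou_open: "open (fatou_set R)"
proof (rule Topological_Spaces.openI)
  fix z assume "z \<in> fatou_set R"
  then obtain U where U: "open U" "z \<in> U" "equi R U" using fatou_iff by blast
  have "U \<subseteq> fatou_set R" using U fatou_iff by blast
  then show "\<exists>T. open T \<and> z \<in> T \<and> T \<subseteq> fatou_set R" using U by blast
qed

lemma julia_closed: "closed (julia_set R)"
proof -
  have "julia_set R = - fatou_set R" by (auto simp: julia_set_def)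
  then show ?thesis using fatou_open closed_Compl by metis
qed

context ratsetup
begin

abbreviation "R \<equiv> rat_map p q"

lemma fatou_fwd:
  assumes "x \<in> fatou_set R" shows "R x \<in> fatou_set R"
proof -
  obtain U where U: "open U" "x \<in> U" "equi R U" using assms fatou_iff by blast
  define W where "W = R ` U"
  have oW: "open W" using R_open U(1) by (simp add: W_def)
  have "equi R W"
    unfolding equi_def
  proof (intro ballI allI impI)
    fix w' e assume w': "w' \<in> W" and e: "(0::real) < e"
    then obtain w where w: "w \<in> U" "w' = R w" by (auto simp: W_def)
    obtain d0 where d0: "d0 > 0" "\<forall>n. \<forall>u\<in>U. dist u w < d0 \<longrightarrow> dist ((R ^^ n) u) ((R ^^ n) w) < e"
      using U(3) w(1) e unfolding equi_def by blast
    define V where "V = R ` (U \<inter> ball w d0)"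
    have oV: "open V" unfolding V_def by (intro R_open open_Int U(1) open_ball)
    have "w' \<in> V" using w d0(1) by (auto simp: V_def)
    then obtain d1 where d1: "d1 > 0" "ball w' d1 \<subseteq> V" using oV open_contains_ball by blast
    show "\<exists>d>0. \<forall>n. \<forall>u\<in>W. dist u w' < d \<longrightarrow> dist ((R ^^ n) u) ((R ^^ n) w') < e"
    proof (intro exI[of _ d1] conjI d1(1) allI ballI impI)
      fix n u' assume "u' \<in> W" "dist u' w' < d1"
      then have "u' \<in> V" using d1(2) by (auto simp: dist_commute)
      then obtain u where u: "u \<in> U" "dist w u < d0" "u' = R u" by (auto simp: V_def)
      have duw: "dist u w < d0" using u(2) by (simp add: dist_commute)
      have "dist ((R ^^ Suc n) u) ((R ^^ Suc n) w) < e"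
        using d0(2) u(1) duw by blast
      then show "dist ((R ^^ n) u') ((R ^^ n) w') < e"
        using u(3) w(2) by (simp only: funpow_Suc_right comp_def)
    qed
  qed
  moreover have "R x \<in> W" using U(2) by (simp add: W_def)
  ultimately show ?thesis using oW fatou_iff by blast
qed

lemma julia_fwd:
  assumes "x \<in> julia_set R" shows "R x \<in> julia_set R"
proof (rule ccontr)
  assume "R x \<notin> julia_set R"
  then have "R x \<in> fatou_set R" by (simp add: julia_set_def)
  then obtain U where U: "open U" "R x \<in> U" "equi R U" using fatou_iff by blast
  define V where "V = R -` U"
  have oV: "open V" unfolding V_def by (rule open_vimage[OF U(1) R_cont])
  have "equi R V"
    unfolding equi_def
  proof (intro ballI allI impI)
    fix w e assume w: "w \<in> V" and e: "(0::real) < e"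
    then have Rw: "R w \<in> U" by (simp add: V_def)
    obtain d0 where d0: "d0 > 0" "\<forall>n. \<forall>u\<in>U. dist u (R w) < d0 \<longrightarrow> dist ((R ^^ n) u) ((R ^^ n) (R w)) < e"
      using U(3) Rw e unfolding equi_def by blast
    obtain d1 where d1: "d1 > 0" "\<forall>u\<in>UNIV. dist u w < d1 \<longrightarrow> dist (R u) (R w) < d0"
      using R_cont d0(1) unfolding continuous_on_iff by blast
    show "\<exists>d>0. \<forall>n. \<forall>u\<in>V. dist u w < d \<longrightarrow> dist ((R ^^ n) u) ((R ^^ n) w) < e"
    proof (intro exI[of _ "min d1 e"] conjI allI ballI impI)
      show "0 < min d1 e" using d1(1) e by simp
      fix n u assume u: "u \<in> V" "dist u w < min d1 e"
      show "dist ((R ^^ n) u) ((R ^^ n) w) < e"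
      proof (cases n)
        case 0 then show ?thesis using u by simp
      next
        case (Suc m)
        have "R u \<in> U" using u(1) by (simp add: V_def)
        moreover have "dist (R u) (R w) < d0" using d1(2) u(2) by simp
        ultimately have "dist ((R ^^ m) (R u)) ((R ^^ m) (R w)) < e" using d0(2) by blast
        then show ?thesis using Suc by (simp only: funpow_Suc_right comp_def)
      qed
    qed
  qed
  then have "x \<in> fatou_set R" using oV U(2) fatou_iff by (auto simp: V_def)
  then show False using assms by (simp add: julia_set_def)
qed

lemma X_fwd:
  assumes "X = julia_set R \<or> X = fatou_set R \<or> X = UNIV" "x \<in> X"
  shows "R x \<in> X"
  using assms julia_fwd fatou_fwd by auto

lemma Xcirc_fwd:
  assumes "X = julia_set R \<or> X = fatou_set R \<or> X = UNIV" "x \<in> Xcirc R X"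
  shows "R x \<in> Xcirc R X"
proof -
  have xX: "x \<in> X" and nb: "\<not> (\<exists>b\<in>special_points R. grand_orbit_rel R x b)"
    using assms(2) by (auto simp: Xcirc_def)
  have "R x \<in> X" using X_fwd[OF assms(1) xX] .
  moreover have "\<not> (\<exists>b\<in>special_points R. grand_orbit_rel R (R x) b)"
  proof
    assume "\<exists>b\<in>special_points R. grand_orbit_rel R (R x) b"
    then obtain b m n where b: "b \<in> special_points R" "(R ^^ m) (R x) = (R ^^ n) b"
      by (auto simp: grand_orbit_rel_def)
    then have "(R ^^ Suc m) x = (R ^^ n) b" by (simp only: funpow_Suc_right comp_def)
    then have "grand_orbit_rel R x b" unfolding grand_orbit_rel_def by blast
    then show False using nb b(1) by blast
  qed
  ultimately show ?thesis by (simp add: Xcirc_def)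
qed

lemma Xcirc_not_branch:
  assumes "x \<in> Xcirc R X" shows "\<not> branch_point R x"
proof
  assume "branch_point R x"
  then have "x \<in> special_points R" unfolding special_points_def
    by (intro CollectI exI[of _ 1]) simp
  moreover have "grand_orbit_rel R x x" unfolding grand_orbit_rel_def
    by (intro exI[of _ 0]) simp
  ultimately show False using assms by (auto simp: Xcirc_def)
qed

end




theorem lemma3p1p2:
  fixes p q :: "complex poly" and X :: "rsphere set"
    and \<alpha> :: "(rsphere \<Rightarrow> complex) \<Rightarrow> (rsphere \<Rightarrow> complex)"
  assumes "q \<noteq> 0" and "coprime p q" and "rat_degree p q \<ge> 2"
    and "X = julia_set (rat_map p q) \<or> X = fatou_set (rat_map p q) \<or> X = UNIV"
    and "X \<noteq> {}"
    and "bounded_op (Xcirc (rat_map p q) X) \<alpha>"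
    and "\<forall>f\<in>C0 X. \<forall>v\<in>ell2 (Xcirc (rat_map p q) X).
           \<alpha> (rhoE (rat_map p q) (Xcirc (rat_map p q) X) f v) = (\<lambda>_. 0)"
  shows "\<forall>v\<in>ell2 (Xcirc (rat_map p q) X). \<alpha> v = (\<lambda>_. 0)"
proof -
  interpret ratsetup p q using assms(1-3) by unfold_locales
  define S where "S = Xcirc (rat_map p q) X"
  have bas: "\<alpha> (basis_vec x) = (\<lambda>_. 0)" if xS: "x \<in> S" for x
  proof -
    have xX: "x \<in> X" using xS by (simp add: S_def Xcirc_def)
    have RxS: "R x \<in> S" using Xcirc_fwd[OF assms(4)] xS by (simp add: S_def)
    obtain U where U: "open U" "x \<in> U" "inj_on R U"
      using Xcirc_not_branch xS unfolding S_def branch_point_def by blast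
    define U' where "U' = U \<inter> (if X = fatou_set R then fatou_set R else UNIV)"
    have oU': "open U'" using U(1) fatou_open[of R] by (simp add: U'_def open_Int)
    have xU': "x \<in> U'" using U(2) xX by (auto simp: U'_def)
    obtain r0 where r0: "r0 > 0" "ball x r0 \<subseteq> U'" using oU' xU' open_contains_ball by blast
    define r where "r = r0 / 2"
    have r: "r > 0" "cball x r \<subseteq> U'" using r0 by (auto simp: r_def)
    have cc: "compact (cball x r)"
      using compact_Int_closed[OF compact_rsphere closed_cball[of x r]] by simp
    have cK: "compact (cball x r \<inter> X)"
    proof -
      consider "X = julia_set R" | "X = fatou_set R" | "X = UNIV" using assms(4) by blast
      then show ?thesis
      proof cases
        case 1 then show ?thesis using compact_Int_closed[OF cc julia_closed] by simp
      next
        case 2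
        then have "cball x r \<subseteq> X" using r(2) by (auto simp: U'_def)
        then have "cball x r \<inter> X = cball x r" by blast
        then show ?thesis using cc by simp
      next
        case 3 then show ?thesis using cc by simp
      qed
    qed
    define f where "f = (\<lambda>y. complex_of_real (max 0 (1 - dist y x / r)))"
    have fC0: "f \<in> C0 X"
      unfolding C0_def
    proof (intro CollectI conjI allI impI)
      show "continuous_on X f" unfolding f_def using r(1) by (intro continuous_intros) auto
      fix e :: real assume e: "e > 0"
      show "\<exists>K. compact K \<and> K \<subseteq> X \<and> (\<forall>y\<in>X - K. cmod (f y) < e)"
      proof (intro exI[of _ "cball x r \<inter> X"] conjI cK ballI)
        show "cball x r \<inter> X \<subseteq> X" by blast
        fix y assume "y \<in> X - cball x r \<inter> X"
        then have "dist x y > r" by auto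
        then have "dist y x / r > 1" using r(1) by (simp add: dist_commute)
        then have "f y = 0" by (simp add: f_def)
        then show "cmod (f y) < e" using e by simp
      qed
    qed
    have wS: "basis_vec (R x) \<in> ell2 S"
      by (rule ell2_finite_support[of "{R x}"]) (use RxS in \<open>auto simp: basis_vec_def\<close>)
    have fx: "f x = 1" using r(1) by (simp add: f_def)
    have rho: "rhoE R S f (basis_vec (R x)) = basis_vec x"
    proof
      fix y
      show "rhoE R S f (basis_vec (R x)) y = basis_vec x y"
      proof (cases "y \<in> S")
        case False
        then have "y \<noteq> x" using xS by blast
        then show ?thesis using False by (simp add: rhoE_def basis_vec_def)
      next
        case yS: True
        show ?thesis
        proof (cases "y = x")
          case True then show ?thesis using yS fx by (simp add: rhoE_def basis_vec_def)
        next
          case False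
          have "f y = 0" if Ry: "R y = R x"
          proof (cases "dist y x < r")
            case True
            then have "y \<in> U" using r(2) by (auto simp: U'_def dist_commute)
            then have "y = x" using U(2,3) Ry inj_on_def by metis
            then show ?thesis using False by simp
          next
            case False
            then have "dist y x / r \<ge> 1" using r(1) by simp
            then show ?thesis by (simp add: f_def)
          qed
          then show ?thesis using yS False by (auto simp: rhoE_def basis_vec_def)
        qed
      qed
    qed
    have "\<alpha> (rhoE R S f (basis_vec (R x))) = (\<lambda>_. 0)"
      using assms(7) fC0 wS by (simp add: S_def)
    then show ?thesis using rho by simp
  qed
  show ?thesis
    using bounded_op_kills[OF assms(6)[folded S_def]] bas by (simp add: S_def)
qed


end
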